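(* Let $h\in A_2(\mathbb R_+,\ell^1)$, and for $n\ge0$ put $Q_n=\langle h\rangle_{I_{n,2}}\langle h^{-1}\rangle_{I_{n,2}}-1$ and $f_n=\langle h\rangle_{I_{n,1}}$. Then, with absolute constants, (i) $C^{-1}(1+Q_n)^{-1}\le f_{n+1}/f_n\le C(1+Q_n)$ for all $n$; (ii) $|f_{n+1}/f_n-1|\le c\sqrt{Q_n}$ whenever $Q_n\le1$; (iii) for $\widetilde h(x)=h(x)/\langle h\rangle_{I_{n,1}}$, $x\in I_{n,1}$, $n\ge0$, one has $\|\widetilde h+\widetilde h^{-1}-2\|_{L^1(\mathbb R_+)}\le C[h]_{2,\ell^1}=C\sum_{n\ge0}Q_n$.
   Context: For a nonnegative $f$ and a set $E$ of positive measure, $\langle f\rangle_E=\frac1{|E|}\int_Ef\,dx$; $I_{x,y}=[x,x+y)$. For measurable $h\ge0$ on $\mathbb R_+=[0,\infty)$, $[h]_{2,\ell^1}=\sum_{n=0}^\infty\big(\langle h\rangle_{I_{n,2}}\langle h^{-1}\rangle_{I_{n,2}}-1\big)$, and $A_2(\mathbb R_+,\ell^1)$ is the class of $h\ge0$ with $[h]_{2,\ell^1}<\infty$. *)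

theory Defs
  imports "HOL-Analysis.Analysis"
begin

definition Ival :: "real \<Rightarrow> real \<Rightarrow> real set" where
  "Ival x y = {x..<x+y}"

definition avg :: "real set \<Rightarrow> (real \<Rightarrow> real) \<Rightarrow> real" where
  "avg E f = (LINT x:E|lborel. f x) / measure lborel E"

definition Qn :: "(real \<Rightarrow> real) \<Rightarrow> nat \<Rightarrow> real" where
  "Qn h n = avg (Ival (real n) 2) h * avg (Ival (real n) 2) (\<lambda>x. 1 / h x) - 1"

definition A2_char :: "(real \<Rightarrow> real) \<Rightarrow> real" where
  "A2_char h = (\<Sum>n. Qn h n)"

text \<open>Membership in A_2(R_+, l^1): h nonnegative measurable on R_+, the averages of h and
  h^{-1} over each I_{n,2} finite (h^{-1} meaningful: h > 0 a.e.), and the series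
  defining [h]_{2,l^1} convergent.\<close>
definition A2_l1 :: "(real \<Rightarrow> real) \<Rightarrow> bool" where
  "A2_l1 h \<longleftrightarrow>
     set_borel_measurable lborel {0..} h \<and>
     (\<forall>x\<ge>0. 0 \<le> h x) \<and>
     (AE x in lborel. 0 \<le> x \<longrightarrow> h x \<noteq> 0) \<and>
     (\<forall>n::nat. set_integrable lborel (Ival (real n) 2) h \<and>
                set_integrable lborel (Ival (real n) 2) (\<lambda>x. 1 / h x)) \<and>
     summable (Qn h)"

definition fn :: "(real \<Rightarrow> real) \<Rightarrow> nat \<Rightarrow> real" where
  "fn h n = avg (Ival (real n) 1) h"

definition htilde :: "(real \<Rightarrow> real) \<Rightarrow> real \<Rightarrow> real" where
  "htilde h x = h x / fn h (nat \<lfloor>x\<rfloor>)"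

end

theory Submission
  imports Defs
begin

definition gn :: "(real \<Rightarrow> real) \<Rightarrow> nat \<Rightarrow> real" where
  "gn h n = avg (Ival (real n) 1) (\<lambda>x. 1 / h x)"

lemma meas_Ival: "y \<ge> 0 \<Longrightarrow> measure lborel (Ival x y) = y"
  by (simp add: Ival_def measure_def)

lemma Ival_split: "Ival (real n) 2 = Ival (real n) 1 \<union> Ival (real (Suc n)) 1"
  "Ival (real n) 1 \<inter> Ival (real (Suc n)) 1 = {}"
  by (auto simp: Ival_def)

lemma integ1:
  assumes "A2_l1 h"
  shows "set_integrable lborel (Ival (real n) 1) h"
    "set_integrable lborel (Ival (real n) 1) (\<lambda>x. 1 / h x)"
proof -
  have a: "set_integrable lborel (Ival (real n) 2) h" "set_integrable lborel (Ival (real n) 2) (\<lambda>x. 1 / h x)"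
    using assms unfolding A2_l1_def by auto
  have s: "Ival (real n) 1 \<subseteq> Ival (real n) 2" by (auto simp: Ival_def)
  show "set_integrable lborel (Ival (real n) 1) h"
    by (rule set_integrable_subset[OF a(1) _ s]) (simp add: Ival_def)
  show "set_integrable lborel (Ival (real n) 1) (\<lambda>x. 1 / h x)"
    by (rule set_integrable_subset[OF a(2) _ s]) (simp add: Ival_def)
qed

lemma avg2:
  assumes "set_integrable lborel (Ival (real n) 2) g"
  shows "avg (Ival (real n) 2) g = (avg (Ival (real n) 1) g + avg (Ival (real (Suc n)) 1) g) / 2"
proof -
  have s: "Ival (real n) 1 \<subseteq> Ival (real n) 2" "Ival (real (Suc n)) 1 \<subseteq> Ival (real n) 2"
    by (auto simp: Ival_def)
  have i1: "set_integrable lborel (Ival (real n) 1) g"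
    by (rule set_integrable_subset[OF assms _ s(1)]) (simp add: Ival_def)
  have i2: "set_integrable lborel (Ival (real (Suc n)) 1) g"
    by (rule set_integrable_subset[OF assms _ s(2)]) (simp add: Ival_def)
  show ?thesis
    unfolding avg_def Ival_split(1)
    apply (subst set_integral_Un[OF Ival_split(2) i1 i2])
    apply (subst Ival_split(1)[symmetric])
    apply (simp add: meas_Ival)
    done
qed

lemma Qn_eq:
  assumes "A2_l1 h"
  shows "Qn h n = (fn h n + fn h (Suc n)) * (gn h n + gn h (Suc n)) / 4 - 1"
proof -
  have a: "set_integrable lborel (Ival (real n) 2) h" "set_integrable lborel (Ival (real n) 2) (\<lambda>x. 1 / h x)"
    using assms unfolding A2_l1_def by auto
  show ?thesis unfolding Qn_def avg2[OF a(1)] avg2[OF a(2)] fn_def gn_def by simp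
qed

definition wfun :: "(real \<Rightarrow> real) \<Rightarrow> nat \<Rightarrow> real \<Rightarrow> real" where
  "wfun h n = (\<lambda>x. indicator (Ival (real n) 1) x * h x / fn h n
     + fn h n * (indicator (Ival (real n) 1) x * (1 / h x)) - 2 * indicator (Ival (real n) 1) x)"

lemma key:
  fixes h :: "real \<Rightarrow> real" and n :: nat
  assumes A: "A2_l1 h"
  defines "B \<equiv> Ival (real n) 1"
  defines "w \<equiv> wfun h n"
  shows "fn h n > 0" "fn h n * gn h n \<ge> 1" "w \<in> borel_measurable lborel"
    "(\<integral>\<^sup>+x. ennreal \<bar>w x\<bar> \<partial>lborel) = ennreal (fn h n * gn h n - 1)"
proof -
  define P where "P = fn h n"
  define R where "R = gn h n"
  have Bs: "B \<in> sets lborel" by (simp add: B_def Ival_def)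
  have mB: "measure lborel B = 1" by (simp add: B_def meas_Ival)
  have eB: "emeasure lborel B = 1" by (simp add: B_def Ival_def)
  have iu: "integrable lborel (\<lambda>x. indicator B x * h x)"
    using integ1(1)[OF A, of n] by (simp add: B_def set_integrable_def)
  have iv: "integrable lborel (\<lambda>x. indicator B x * (1 / h x))"
    using integ1(2)[OF A, of n] by (simp add: B_def set_integrable_def)
  have iB: "integrable lborel (\<lambda>x. indicator B x :: real)"
    using Bs eB by (intro integrable_real_indicator) auto
  have Pe: "P = (\<integral>x. indicator B x * h x \<partial>lborel)"
    by (simp add: P_def fn_def avg_def B_def[symmetric] mB set_lebesgue_integral_def)
  have Re: "R = (\<integral>x. indicator B x * (1 / h x) \<partial>lborel)"
    by (simp add: R_def gn_def avg_def B_def[symmetric] mB set_lebesgue_integral_def)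
  have B0: "x \<in> B \<Longrightarrow> x \<ge> 0" for x by (auto simp: B_def Ival_def)
  have hnn: "x \<ge> 0 \<Longrightarrow> h x \<ge> 0" for x using A by (auto simp: A2_l1_def)
  have AEh: "AE x in lborel. 0 \<le> x \<longrightarrow> h x \<noteq> 0" using A by (simp add: A2_l1_def)
  have unn: "0 \<le> indicator B x * h x" for x
    by (cases "x \<in> B") (auto intro: hnn B0)
  have P0: "P \<ge> 0" unfolding Pe using unn by (intro integral_nonneg_AE) auto
  have Pp: "P > 0"
  proof (rule ccontr)
    assume "\<not> P > 0"
    then have "P = 0" using P0 by simp
    then have "AE x in lborel. indicator B x * h x = 0"
      using integral_nonneg_eq_0_iff_AE[OF iu] unn Pe by auto
    with AEh have "AE x in lborel. x \<notin> B"
      by eventually_elim (auto dest: B0)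
    then have "emeasure lborel B = 0"
      using AE_iff_measurable[OF Bs, of "\<lambda>x. x \<notin> B"] by auto
    with eB show False by simp
  qed
  then show "fn h n > 0" by (simp add: P_def)
  have wdef: "w = (\<lambda>x. indicator B x * h x / P + P * (indicator B x * (1 / h x)) - 2 * indicator B x)"
    by (simp add: w_def P_def wfun_def B_def)
  have iw: "integrable lborel w" unfolding wdef
    by (intro Bochner_Integration.integrable_diff Bochner_Integration.integrable_add integrable_divide_zero integrable_mult_right iu iv iB)
  then show "w \<in> borel_measurable lborel" by auto
  have intw: "(\<integral>x. w x \<partial>lborel) = P * R - 1"
    unfolding wdef
    apply (subst Bochner_Integration.integral_diff)
      apply (intro Bochner_Integration.integrable_diff Bochner_Integration.integrable_add integrable_divide_zero integrable_mult_right iu iv iB)+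
    apply (subst Bochner_Integration.integral_add)
      apply (intro Bochner_Integration.integrable_diff Bochner_Integration.integrable_add integrable_divide_zero integrable_mult_right iu iv iB)+
    using Pp mB by (simp only: integral_mult_right_zero integral_divide_zero Pe[symmetric] Re[symmetric]
       Bochner_Integration.integral_mult_right_zero) (simp add: Bochner_Integration.integral_indicator mB)
  have AEw: "AE x in lborel. 0 \<le> w x"
    using AEh
  proof eventually_elim
    case (elim x)
    show ?case
    proof (cases "x \<in> B")
      case True
      then have hp: "h x > 0" using elim B0 hnn by force
      have "w x = h x / P + P / h x - 2" using True by (simp add: wdef)
      also have "\<dots> = (h x - P)^2 / (h x * P)" using hp Pp by (simp add: field_simps power2_eq_square)
      also have "\<dots> \<ge> 0" using hp Pp by simp
      finally show ?thesis .
    qed (simp add: wdef)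
  qed
  have "(\<integral>\<^sup>+x. ennreal \<bar>w x\<bar> \<partial>lborel) = (\<integral>\<^sup>+x. ennreal (w x) \<partial>lborel)"
    using AEw by (intro nn_integral_cong_AE) auto
  also have "\<dots> = ennreal (P * R - 1)"
    using nn_integral_eq_integral[OF iw AEw] intw by simp
  finally show "(\<integral>\<^sup>+x. ennreal \<bar>w x\<bar> \<partial>lborel) = ennreal (fn h n * gn h n - 1)"
    by (simp add: P_def R_def)
  have "0 \<le> (\<integral>x. w x \<partial>lborel)" using AEw by (intro integral_nonneg_AE)
  then show "fn h n * gn h n \<ge> 1" using intw by (simp add: P_def R_def)
qed
lemma alg:
  fixes f F g G Q :: real
  assumes "f>0" "F>0" "g>0" "G>0" "f*g\<ge>1" "F*G\<ge>1" "Q = (f+F)*(g+G)/4 - 1"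
  shows "F/f \<le> 4*(1+Q)" "f/F \<le> 4*(1+Q)" "F/f + f/F - 2 \<le> 4*Q" "f*g - 1 \<le> 4*Q" "Q \<ge> 0"
proof -
  have g1: "g \<ge> 1/f" using assms by (simp add: field_simps)
  have G1: "G \<ge> 1/F" using assms by (simp add: field_simps)
  have e: "4*(1+Q) = (f+F)*(g+G)" using assms by simp
  have e2: "4*Q = (f+F)*(g+G) - 4" using assms by simp
  have "(f+F)*(g+G) \<ge> (f+F)*(1/f+1/F)" using g1 G1 assms by (intro mult_left_mono) auto
  moreover have "(f+F)*(1/f+1/F) = 2 + F/f + f/F" using assms by (simp add: field_simps)
  ultimately have m: "(f+F)*(g+G) \<ge> 2 + F/f + f/F" by simp
  have pos: "F/f > 0" "f/F > 0" using assms by auto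
  show "F/f \<le> 4*(1+Q)" using m e pos by linarith
  show "f/F \<le> 4*(1+Q)" using m e pos by linarith
  show "F/f + f/F - 2 \<le> 4*Q" using m e2 by linarith
  have "F/f + f/F \<ge> 2"
  proof -
    have "F/f + f/F - 2 = (F-f)^2/(f*F)" using assms by (simp add: field_simps power2_eq_square)
    moreover have "(F-f)^2/(f*F) \<ge> 0" using assms by simp
    ultimately show ?thesis by linarith
  qed
  then show "Q \<ge> 0" using m e2 by linarith
  have x: "f*G + F*g \<ge> 2"
  proof -
    have "(f*G)*(F*g) \<ge> 1" 
    proof -
      have "(f*G)*(F*g) = (f*g)*(F*G)" by (simp add: algebra_simps)
      moreover have "(f*g)*(F*G) \<ge> 1*1" using assms by (intro mult_mono) auto
      ultimately show ?thesis by (metis mult_1)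
    qed
    have "(f*G + F*g)^2 \<ge> 4*(f*G)*(F*g)" 
    proof -
      have "(f*G + F*g)^2 - 4*(f*G)*(F*g) = (f*G - F*g)^2" by (simp add: power2_eq_square algebra_simps)
      moreover have "(f*G - F*g)^2 \<ge> 0" by simp
      ultimately show ?thesis by linarith
    qed
    then have sq: "(f*G + F*g)^2 \<ge> 2^2" using \<open>(f*G)*(F*g) \<ge> 1\<close> by simp
    have "f*G + F*g \<ge> 0" using assms by simp
    then show ?thesis using sq power2_le_imp_le by blast
  qed
  have "4*(1+Q) = f*g + F*G + (f*G + F*g)" using e by (simp add: algebra_simps)
  then show "f*g - 1 \<le> 4*Q" using x assms e2 by (simp add: algebra_simps)
qed

lemma wfun_out: "x \<notin> Ival (real n) 1 \<Longrightarrow> wfun h n x = 0"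
  by (simp add: wfun_def)

lemma pointwise:
  "ennreal \<bar>htilde h x + 1 / htilde h x - 2\<bar> * indicator {0..} x = (\<Sum>n. ennreal \<bar>wfun h n x\<bar>)"
proof (cases "x \<ge> 0")
  case False
  then have "\<And>n. x \<notin> Ival (real n) 1" by (auto simp: Ival_def)
  then show ?thesis using False by (simp add: wfun_out)
next
  case True
  define m where "m = nat \<lfloor>x\<rfloor>"
  have rm: "real m = of_int \<lfloor>x\<rfloor>" using True by (simp add: m_def)
  have xm: "x \<in> Ival (real m) 1" unfolding Ival_def rm
    using of_int_floor_le[of x] real_of_int_floor_add_one_gt[of x] by auto
  have other: "n \<noteq> m \<Longrightarrow> x \<notin> Ival (real n) 1" for n
  proof
    assume "n \<noteq> m" "x \<in> Ival (real n) 1"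
    then have "\<lfloor>x\<rfloor> = int n" by (simp add: Ival_def floor_eq_iff)
    then have "m = n" by (simp add: m_def)
    with \<open>n \<noteq> m\<close> show False by simp
  qed
  have "(\<lambda>n. ennreal \<bar>wfun h n x\<bar>) = (\<lambda>n. if n = m then ennreal \<bar>wfun h m x\<bar> else 0)"
    using other by (auto simp: wfun_out)
  then have "(\<Sum>n. ennreal \<bar>wfun h n x\<bar>) = ennreal \<bar>wfun h m x\<bar>"
    using sums_unique[OF sums_single[of m "\<lambda>_. ennreal \<bar>wfun h m x\<bar>"]] by simp
  moreover have "wfun h m x = htilde h x + 1 / htilde h x - 2"
    using xm by (simp add: wfun_def htilde_def m_def[symmetric])
  ultimately show ?thesis using True by simp
qed

theorem lemma5p2:
  shows "\<exists>C c :: real. C > 0 \<and> c > 0 \<and>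
    (\<forall>h. A2_l1 h \<longrightarrow>
      (\<forall>n. (1 / C) * (1 / (1 + Qn h n)) \<le> fn h (Suc n) / fn h n \<and>
           fn h (Suc n) / fn h n \<le> C * (1 + Qn h n)) \<and>
      (\<forall>n. Qn h n \<le> 1 \<longrightarrow> \<bar>fn h (Suc n) / fn h n - 1\<bar> \<le> c * sqrt (Qn h n)) \<and>
      (\<integral>\<^sup>+ x \<in> {0..}. ennreal \<bar>htilde h x + 1 / htilde h x - 2\<bar> \<partial>lborel)
         \<le> ennreal (C * A2_char h))"
proof -
  have main: "(\<forall>n. (1 / 8) * (1 / (1 + Qn h n)) \<le> fn h (Suc n) / fn h n \<and>
           fn h (Suc n) / fn h n \<le> 8 * (1 + Qn h n)) \<and>
      (\<forall>n. Qn h n \<le> 1 \<longrightarrow> \<bar>fn h (Suc n) / fn h n - 1\<bar> \<le> 6 * sqrt (Qn h n)) \<and>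
      (\<integral>\<^sup>+ x \<in> {0..}. ennreal \<bar>htilde h x + 1 / htilde h x - 2\<bar> \<partial>lborel)
         \<le> ennreal (8 * A2_char h)" if A: "A2_l1 h" for h
  proof -
    have facts: "fn h n > 0 \<and> fn h (Suc n) > 0 \<and> gn h n > 0 \<and> gn h (Suc n) > 0 \<and>
        fn h n * gn h n \<ge> 1 \<and> fn h (Suc n) * gn h (Suc n) \<ge> 1" for n
    proof -
      have a: "fn h n > 0" "fn h n * gn h n \<ge> 1" "fn h (Suc n) > 0" "fn h (Suc n) * gn h (Suc n) \<ge> 1"
        using key[OF A, of n] key[OF A, of "Suc n"] by auto
      have gp: "y > 0" if "x > 0" "x * y \<ge> 1" for x y :: real
      proof (rule ccontr)
        assume "\<not> y > 0"
        then have "x * y \<le> 0" using that(1) by (simp add: mult_nonneg_nonpos)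
        then show False using that(2) by simp
      qed
      have "gn h n > 0" using a(1,2) by (rule gp)
      moreover have "gn h (Suc n) > 0" using a(3,4) by (rule gp)
      ultimately show ?thesis using a by auto
    qed
    note al = alg[OF _ _ _ _ _ _ Qn_eq[OF A]]
    have i: "(1 / 8) * (1 / (1 + Qn h n)) \<le> fn h (Suc n) / fn h n \<and>
           fn h (Suc n) / fn h n \<le> 8 * (1 + Qn h n)" for n
    proof -
      define r where "r = fn h (Suc n) / fn h n"
      define Q where "Q = Qn h n"
      have r1: "r \<le> 4*(1+Q)" "1/r \<le> 4*(1+Q)" "Q \<ge> 0" "r > 0"
        using al[of n] facts[of n] by (auto simp: r_def Q_def)
      have "r * (4*(1+Q)) \<ge> r * (1/r)" using r1 by (intro mult_left_mono) auto
      then have "r * (4*(1+Q)) \<ge> 1" using r1 by simp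
      then have "1/8 * (1/(1+Q)) \<le> r" using r1 by (simp add: field_simps)
      moreover have "r \<le> 8*(1+Q)" using r1 by linarith
      ultimately show ?thesis by (simp add: r_def Q_def)
    qed
    have ii: "Qn h n \<le> 1 \<longrightarrow> \<bar>fn h (Suc n) / fn h n - 1\<bar> \<le> 6 * sqrt (Qn h n)" for n
    proof
      assume Q1: "Qn h n \<le> 1"
      define r where "r = fn h (Suc n) / fn h n"
      define Q where "Q = Qn h n"
      have r1: "r \<le> 4*(1+Q)" "r + 1/r - 2 \<le> 4*Q" "Q \<ge> 0" "r > 0" "Q \<le> 1"
        using al[of n] facts[of n] Q1 by (auto simp: r_def Q_def)
      have "(r-1)^2 = r * (r + 1/r - 2)" using r1 by (simp add: field_simps power2_eq_square)
      also have "\<dots> \<le> r * (4*Q)"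
        using r1 by (intro mult_left_mono) auto
      also have "\<dots> \<le> 8 * (4*Q)"
        using r1 by (intro mult_right_mono) auto
      finally have sq: "(r-1)^2 \<le> 32 * Q" by simp
      have "\<bar>r-1\<bar> = sqrt ((r-1)^2)" by simp
      also have "\<dots> \<le> sqrt (32 * Q)" using sq by (rule real_sqrt_le_mono)
      also have "\<dots> = sqrt 32 * sqrt Q" by (simp add: real_sqrt_mult)
      also have "\<dots> \<le> 6 * sqrt Q"
      proof (rule mult_right_mono)
        have "sqrt 32 \<le> sqrt (6^2)" by (intro real_sqrt_le_mono) simp
        then show "sqrt 32 \<le> (6::real)" by simp
      qed (simp add: r1)
      finally show "\<bar>fn h (Suc n) / fn h n - 1\<bar> \<le> 6 * sqrt (Qn h n)" by (simp add: r_def Q_def)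
    qed
    have [measurable]: "wfun h n \<in> borel_measurable lborel" for n
      using key(3)[OF A, of n] by simp
    have "(\<integral>\<^sup>+ x \<in> {0..}. ennreal \<bar>htilde h x + 1 / htilde h x - 2\<bar> \<partial>lborel)
        = (\<integral>\<^sup>+ x. (\<Sum>n. ennreal \<bar>wfun h n x\<bar>) \<partial>lborel)"
      by (simp add: pointwise)
    also have "\<dots> = (\<Sum>n. (\<integral>\<^sup>+ x. ennreal \<bar>wfun h n x\<bar> \<partial>lborel))"
      by (rule nn_integral_suminf) measurable
    also have "\<dots> = (\<Sum>n. ennreal (fn h n * gn h n - 1))"
      using key(4)[OF A] by simp
    also have "\<dots> \<le> (\<Sum>n. ennreal (4 * Qn h n))"
      using al facts by (intro suminf_le ennreal_leI) auto
    also have "\<dots> = ennreal (\<Sum>n. 4 * Qn h n)"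
      using al facts A by (intro suminf_ennreal2) (auto simp: A2_l1_def intro: summable_mult)
    also have "\<dots> = ennreal (4 * A2_char h)"
      using A by (simp add: A2_char_def A2_l1_def suminf_mult)
    also have "\<dots> \<le> ennreal (8 * A2_char h)"
    proof -
      have "A2_char h \<ge> 0" unfolding A2_char_def using A al facts
        by (intro suminf_nonneg) (auto simp: A2_l1_def)
      then show ?thesis by (intro ennreal_leI) simp
    qed
    finally show ?thesis using i ii by blast
  qed
  show ?thesis
    apply (rule exI[of _ "8::real"], rule exI[of _ "6::real"])
    apply (intro conjI)
      apply simp
     apply simp
    using main by blast
qed

end
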